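(* Let $c>0$, $n\ge 2$, and let $\mathbb{R}^n_c=\{\mathbf{v}\in\mathbb{R}^n:\|\mathbf{v}\|<c\}$ be equipped with Möbius addition $\oplus$, Möbius scalar multiplication $\otimes$ and Möbius coaddition $\boxplus$ (defined in the context). Let $C,D\in\mathbb{R}^n_c$ be distinct and let $L_{CD}(t)=C\oplus\big((\ominus C\oplus D)\otimes t\big)$, $t\in\mathbb{R}$, be the Möbius gyroline through $C$ and $D$. Then the supporting chord of this gyroline is the set $\{C\boxplus L_{CD}(t):t\in\mathbb{R}\}$. Furthermore, this supporting chord passes through the points $$P_1=C\boxplus C=2\otimes C,\qquad P_2=D\boxplus D=2\otimes D,\qquad P_3=C\boxplus D.$$
   Context: Möbius addition in the ball $\mathbb{R}^n_c$ is $$\mathbf{u}\oplus\mathbf{v}=\frac{\big(1+\frac{2}{c^2}\mathbf{u}\cdot\mathbf{v}+\frac{1}{c^2}\|\mathbf{v}\|^2\big)\mathbf{u}+\big(1-\frac{1}{c^2}\|\mathbf{u}\|^2\big)\mathbf{v}}{1+\frac{2}{c^2}\mathbf{u}\cdot\mathbf{v}+\frac{1}{c^4}\|\mathbf{u}\|^2\|\mathbf{v}\|^2},$$ with $\ominus\mathbf{v}=-\mathbf{v}$. Scalar multiplication: for $r\in\mathbb{R}$ and $\mathbf{v}\neq\mathbf{0}$, $r\otimes\mathbf{v}=\mathbf{v}\otimes r=c\tanh\!\big(r\tanh^{-1}(\|\mathbf{v}\|/c)\big)\frac{\mathbf{v}}{\|\mathbf{v}\|}$, and $r\otimes\mathbf{0}=\mathbf{0}$.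 The gyration generated by $\mathbf{u},\mathbf{v}$ is $\mathrm{gyr}[\mathbf{u},\mathbf{v}]\mathbf{w}=\ominus(\mathbf{u}\oplus\mathbf{v})\oplus\big(\mathbf{u}\oplus(\mathbf{v}\oplus\mathbf{w})\big)$, and Möbius coaddition is $\mathbf{a}\boxplus\mathbf{b}=\mathbf{a}\oplus\mathrm{gyr}[\mathbf{a},\ominus\mathbf{b}]\mathbf{b}$. A Möbius gyroline $L_{CD}$ is (the intersection with the ball of) a Euclidean circular arc or diameter meeting the boundary sphere $\|\mathbf{x}\|=c$ at two endpoints $\lim_{t\to\pm\infty}L_{CD}(t)$; its supporting chord is the set of points of the open ball $\mathbb{R}^n_c$ lying on the Euclidean straight line through these two endpoints. *)

theory Defs
  imports "HOL-Analysis.Analysis"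
begin

definition mobius_add :: "real \<Rightarrow> real^'n \<Rightarrow> real^'n \<Rightarrow> real^'n" where
  "mobius_add c u v =
     (1 / (1 + (2 / c^2) * (u \<bullet> v) + (1 / c^4) * (norm u)^2 * (norm v)^2)) *\<^sub>R
     ((1 + (2 / c^2) * (u \<bullet> v) + (1 / c^2) * (norm v)^2) *\<^sub>R u
      + (1 - (1 / c^2) * (norm u)^2) *\<^sub>R v)"

definition mobius_neg :: "real^'n \<Rightarrow> real^'n" where
  "mobius_neg v = - v"

definition mobius_smult :: "real \<Rightarrow> real \<Rightarrow> real^'n \<Rightarrow> real^'n" where
  "mobius_smult c r v =
     (if v = 0 then 0
      else (c * tanh (r * artanh (norm v / c))) *\<^sub>R ((1 / norm v) *\<^sub>R v))"

definition mobius_gyr :: "real \<Rightarrow> real^'n \<Rightarrow> real^'n \<Rightarrow> real^'n \<Rightarrow> real^'n" where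
  "mobius_gyr c u v w =
     mobius_add c (mobius_neg (mobius_add c u v)) (mobius_add c u (mobius_add c v w))"

definition mobius_coadd :: "real \<Rightarrow> real^'n \<Rightarrow> real^'n \<Rightarrow> real^'n" where
  "mobius_coadd c a b = mobius_add c a (mobius_gyr c a (mobius_neg b) b)"

definition gyroline :: "real \<Rightarrow> real^'n \<Rightarrow> real^'n \<Rightarrow> real \<Rightarrow> real^'n" where
  "gyroline c C D t = mobius_add c C (mobius_smult c t (mobius_add c (mobius_neg C) D))"

definition supporting_chord :: "real \<Rightarrow> real^'n \<Rightarrow> real^'n \<Rightarrow> (real^'n) set" where
  "supporting_chord c E1 E2 = {x. norm x < c \<and> x \<in> affine hull {E1, E2}}"

end

theory Submission
  imports Defs
begin


definition ip :: "real \<Rightarrow> real^'n \<Rightarrow> real^'n \<Rightarrow> real" where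
  "ip c u v = (u \<bullet> v) / c^2"

lemma ip_commute: "ip c u v = ip c v u" by (simp add: ip_def inner_commute)

definition dn :: "real \<Rightarrow> real^'n \<Rightarrow> real^'n \<Rightarrow> real" where
  "dn c u v = 1 + 2*ip c u v + ip c u u * ip c v v"

lemma madd_eq: "c \<noteq> 0 \<Longrightarrow> mobius_add c u v =
  ((1 + 2*ip c u v + ip c v v) / dn c u v) *\<^sub>R u + ((1 - ip c u u) / dn c u v) *\<^sub>R v"
  unfolding mobius_add_def dn_def ip_def power2_norm_eq_inner
  by (simp add: scaleR_add_right power4_eq_xxxx power2_eq_square mult.assoc)

lemma ip2: "ip c (\<alpha> *\<^sub>R a + \<beta> *\<^sub>R b) (\<gamma> *\<^sub>R a + \<delta> *\<^sub>R b)
   = \<alpha>*\<gamma>*ip c a a + (\<alpha>*\<delta>+\<beta>*\<gamma>)*ip c a b + \<beta>*\<delta>*ip c b b"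
  by (simp add: ip_def inner_add_left inner_add_right inner_commute[of b a] add_divide_distrib algebra_simps)

lemma ip_scale: "ip c (\<alpha> *\<^sub>R a) b = \<alpha> * ip c a b" "ip c a (\<alpha> *\<^sub>R b) = \<alpha> * ip c a b"
  "ip c (-a) b = - ip c a b" "ip c a (-b) = - ip c a b" "ip c 0 b = 0" "ip c a 0 = 0"
  by (simp_all add: ip_def)

lemma ip_norm: "ip c u u = (norm u / c)^2"
  by (simp add: ip_def power2_norm_eq_inner power_divide)

lemma ip_lt1: "c > 0 \<Longrightarrow> norm u < c \<Longrightarrow> ip c u u < 1"
  unfolding ip_norm by (simp add: power_less_one_iff abs_less_iff)

lemma dn_pos:
  assumes c: "c > 0" and uv: "norm u * norm v < c^2"
  shows "dn c u v > 0"
proof -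
  define x where "x = norm u * norm v / c^2"
  have c2: "c^2 > 0" using c by simp
  have x1: "x < 1" unfolding x_def using uv c2 by (simp add: divide_less_eq)
  have "u\<bullet>v \<ge> - (norm u * norm v)" using Cauchy_Schwarz_ineq2[of u v] by linarith
  hence "(u\<bullet>v)/c^2 \<ge> - (norm u * norm v)/c^2" using c2 divide_right_mono[of "- (norm u * norm v)" "u\<bullet>v" "c^2"] by simp
  hence h1: "ip c u v \<ge> -x" unfolding ip_def x_def by simp
  have h2: "ip c u u * ip c v v = x^2" unfolding ip_norm x_def
    by (simp add: power_mult_distrib power_divide)
  have "(1-x)^2 > 0" using x1 by simp
  hence "1 - 2*x + x^2 > 0" by (simp add: power2_eq_square algebra_simps)
  thus ?thesis unfolding dn_def h2 using h1 by linarith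
qed





lemma sc_norm:
  fixes U V W d :: real
  assumes dd: "d = 1 + 2*W + U*V" and dnz: "d \<noteq> 0"
  shows "((1 + 2*W + V) / d)^2 * U + 2 * ((1 + 2*W + V) / d) * ((1 - U) / d) * W
     + ((1 - U) / d)^2 * V = 1 - (1 - U)*(1 - V) / d"
  using dnz by (simp add: field_simps power2_eq_square; use dd in algebra)

lemma scY:
  fixes A B P d \<alpha> \<beta> s t :: real
  assumes dd: "d = 1 - 2*P + A*B" and dnz: "d \<noteq> 0" and A1: "1 - A \<noteq> 0"
    and al: "\<alpha> = (1 - 2*P + B)/d" and be: "\<beta> = -(1 - A)/d"
    and s: "s = (1 + 2*(-(\<alpha>*A+\<beta>*P)) + A)/(1 + 2*(-(\<alpha>*A+\<beta>*P)) + (\<alpha>^2*A+2*\<alpha>*\<beta>*P+\<beta>^2*B)*A)"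
    and t: "t = (1 - (\<alpha>^2*A+2*\<alpha>*\<beta>*P+\<beta>^2*B))/(1 + 2*(-(\<alpha>*A+\<beta>*P)) + (\<alpha>^2*A+2*\<alpha>*\<beta>*P+\<beta>^2*B)*A)"
  shows "- s*\<alpha> + t = -2*B*(1-P)/d" "- s*\<beta> = (1-A*B)/d"
proof -
  obtain e where e: "e = 1 - A" by blast
  have en: "e \<noteq> 0" using A1 e by simp
  have n1: "1 + 2*(-(\<alpha>*A+\<beta>*P)) + A = e*(1-A*B)/d"
    using dnz by (simp add: al be e field_simps; use dd in algebra)
  have n2: "1 + 2*(-(\<alpha>*A+\<beta>*P)) + (\<alpha>^2*A+2*\<alpha>*\<beta>*P+\<beta>^2*B)*A = e^2/d"
    using dnz by (simp add: al be e field_simps power2_eq_square; use dd in algebra)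
  have n3: "1 - (\<alpha>^2*A+2*\<alpha>*\<beta>*P+\<beta>^2*B) = e*(1-B)/d"
    using dnz by (simp add: al be e field_simps power2_eq_square; use dd in algebra)
  have s': "s = (1-A*B)/e" unfolding s n1 n2 using dnz en by (simp add: field_simps power2_eq_square)
  have t': "t = (1-B)/e" unfolding t n3 n2 using dnz en by (simp add: field_simps power2_eq_square)
  show "- s*\<alpha> + t = -2*B*(1-P)/d"
    unfolding s' t' al using dnz en by (simp add: field_simps; use dd e in algebra)
  show "- s*\<beta> = (1-A*B)/d"
    unfolding s' be e[symmetric] using dnz en by (simp add: field_simps)
qed

lemma scF:
  fixes A B P d \<gamma> \<delta> s t :: real
  assumes dd: "d = 1 - 2*P + A*B" and dnz: "d \<noteq> 0" and AB: "1 - A*B \<noteq> 0"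
    and ga: "\<gamma> = -2*B*(1-P)/d" and de: "\<delta> = (1-A*B)/d"
    and s: "s = (1 + 2*(\<gamma>*A+\<delta>*P) + (\<gamma>^2*A+2*\<gamma>*\<delta>*P+\<delta>^2*B))/(1 + 2*(\<gamma>*A+\<delta>*P) + A*(\<gamma>^2*A+2*\<gamma>*\<delta>*P+\<delta>^2*B))"
    and t: "t = (1 - A)/(1 + 2*(\<gamma>*A+\<delta>*P) + A*(\<gamma>^2*A+2*\<gamma>*\<delta>*P+\<delta>^2*B))"
  shows "s + t*\<gamma> = (1-B)/(1-A*B)" "t*\<delta> = (1-A)/(1-A*B)"
proof -
  obtain g where g: "g = 1 - A*B" by blast
  have gn: "g \<noteq> 0" using AB g by simp
  have Y: "\<gamma>^2*A+2*\<gamma>*\<delta>*P+\<delta>^2*B = B"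
    using dnz by (simp add: ga de field_simps power2_eq_square; use dd in algebra)
  have n1: "1 + 2*(\<gamma>*A+\<delta>*P) + A*B = g^2/d"
    using dnz by (simp add: ga de g field_simps power2_eq_square; use dd in algebra)
  have n2: "1 + 2*(\<gamma>*A+\<delta>*P) + B = (1 + B - 2*P*B - 3*A*B + A*B*B + 2*A*B*P)/d"
    using dnz by (simp add: ga de field_simps power2_eq_square; use dd in algebra)
  show "s + t*\<gamma> = (1-B)/(1-A*B)"
    unfolding s t Y n1 n2 unfolding ga g[symmetric] using dnz gn by (simp add: field_simps power2_eq_square; use dd g in algebra)
  show "t*\<delta> = (1-A)/(1-A*B)"
    unfolding t Y n1 unfolding de g[symmetric] using dnz gn by (simp add: field_simps power2_eq_square)
qed

lemma scCancel:
  fixes A B P d \<alpha> \<beta> s t :: real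
  assumes dd: "d = 1 + 2*(-P) + A*B" and dnz: "d \<noteq> 0" and A1: "1 - A \<noteq> 0"
    and al: "\<alpha> = -((1 + 2*(-P) + B)/d)" and be: "\<beta> = (1-A)/d"
    and s: "s = (1 + 2*(\<alpha>*A+\<beta>*P) + (\<alpha>^2*A+2*\<alpha>*\<beta>*P+\<beta>^2*B))/(1 + 2*(\<alpha>*A+\<beta>*P) + A*(\<alpha>^2*A+2*\<alpha>*\<beta>*P+\<beta>^2*B))"
    and t: "t = (1 - A)/(1 + 2*(\<alpha>*A+\<beta>*P) + A*(\<alpha>^2*A+2*\<alpha>*\<beta>*P+\<beta>^2*B))"
  shows "s + t*\<alpha> = 0" "t*\<beta> = 1"
proof -
  obtain e where e: "e = 1 - A" by blast
  have en: "e \<noteq> 0" using A1 e by simp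
  have n1: "1 + 2*(\<alpha>*A+\<beta>*P) + A*(\<alpha>^2*A+2*\<alpha>*\<beta>*P+\<beta>^2*B) = e^2/d"
    using dnz by (simp add: al be e field_simps power2_eq_square; use dd in algebra)
  have n2: "1 + 2*(\<alpha>*A+\<beta>*P) + (\<alpha>^2*A+2*\<alpha>*\<beta>*P+\<beta>^2*B) = e*(1-2*P+B)/d"
    using dnz by (simp add: al be e field_simps power2_eq_square; use dd in algebra)
  show "s + t*\<alpha> = 0"
    unfolding s t n1 n2 unfolding al e[symmetric] using dnz en by (simp add: field_simps power2_eq_square; use dd in algebra)
  show "t*\<beta> = 1"
    unfolding t n1 unfolding be e[symmetric] using dnz en by (simp add: field_simps power2_eq_square)
qed

lemma canc1: "(a::real) \<noteq> 0 \<Longrightarrow> d \<noteq> 0 \<Longrightarrow> (a*x/d)/(a*y/d) = x/y"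
  by (cases "y = 0") (simp_all add: field_simps)
lemma canc2: "(a::real) \<noteq> 0 \<Longrightarrow> d \<noteq> 0 \<Longrightarrow> a/(a*y/d) = d/y"
  by (cases "y = 0") (simp_all add: field_simps)
lemma canc3: "(w::real) \<noteq> 0 \<Longrightarrow> (x/w)/(y/w) = x/y"
  by (cases "y = 0") (simp_all add: field_simps)

lemma scFF:
  fixes A X Q d B :: real
  assumes dd: "d = 1 + 2*Q + A*X" and dnz: "d \<noteq> 0" and A1: "1 - A \<noteq> 0"
    and B: "B = 1 - (1-A)*(1-X)/d" and q: "1 + A + 2*Q \<noteq> 0"
  shows "(1-B)/(1-A*B) + (1-A)/(1-A*B)*((1+2*Q+X)/d) = (2+2*Q)/(1+A+2*Q)"
        "(1-A)/(1-A*B)*((1-A)/d) = (1-A)/(1+A+2*Q)"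
proof -
  obtain z where z: "z = 1 + A + 2*Q" by blast
  have zn: "z \<noteq> 0" using q z by simp
  have n: "1 - A*B = (1-A)*z/d"
    using dnz by (simp add: B z field_simps; use dd in algebra)
  have m: "1 - B = (1-A)*(1-X)/d" by (simp add: B)
  have r1: "(1-B)/(1-A*B) = (1-X)/z" unfolding n m by (rule canc1[OF A1 dnz])
  have r2: "(1-A)/(1-A*B) = d/z" unfolding n by (rule canc2[OF A1 dnz])
  show "(1-B)/(1-A*B) + (1-A)/(1-A*B)*((1+2*Q+X)/d) = (2+2*Q)/(1+A+2*Q)"
    unfolding r1 r2 z[symmetric] using dnz zn by (simp add: field_simps; algebra)
  show "(1-A)/(1-A*B)*((1-A)/d) = (1-A)/(1+A+2*Q)"
    unfolding r2 z[symmetric] using dnz zn by (simp add: field_simps)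
qed

lemma scDD:
  fixes A V Q d DD :: real
  assumes dd: "d = 1 + 2*Q + A*V" and dnz: "d \<noteq> 0" and V1: "1 + V \<noteq> 0"
    and DD: "DD = 1 - (1-A)*(1-V)/d"
    and q: "1 + A + 2*(2/(1+V)*Q) \<noteq> 0"
  shows "2/(1+DD) * ((1+2*Q+V)/d) = (2 + 2*(2/(1+V)*Q))/(1 + A + 2*(2/(1+V)*Q))"
        "2/(1+DD) * ((1-A)/d) = (1-A)/(1 + A + 2*(2/(1+V)*Q)) * (2/(1+V))"
proof -
  obtain z where z: "z = (1+A)*(1+V) + 4*Q" by blast
  obtain w where w: "w = 1 + V" by blast
  have wn: "w \<noteq> 0" using V1 w by simp
  have n: "1 + DD = z/d"
    using dnz by (simp add: DD z field_simps; use dd in algebra)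
  have q': "1 + A + 2*(2/(1+V)*Q) = z/w"
    unfolding w[symmetric] using wn by (simp add: field_simps; use z w in algebra)
  have zn: "z \<noteq> 0" using q q' by auto
  have e: "2/(1+DD) = 2*d/z" unfolding n using dnz by simp
  have f: "2 + 2*(2/(1+V)*Q) = (2*w+4*Q)/w" unfolding w[symmetric] using wn by (simp add: field_simps)
  show "2/(1+DD) * ((1+2*Q+V)/d) = (2 + 2*(2/(1+V)*Q))/(1 + A + 2*(2/(1+V)*Q))"
    unfolding e q' f unfolding canc3[OF wn] using dnz zn by (simp add: field_simps; use w in algebra)
  show "2/(1+DD) * ((1-A)/d) = (1-A)/(1 + A + 2*(2/(1+V)*Q)) * (2/(1+V))"
    unfolding e q' unfolding w[symmetric] using dnz zn wn by (simp add: field_simps)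
qed

definition hC :: "real \<Rightarrow> real \<Rightarrow> real \<Rightarrow> real" where "hC A q s = (2+2* s*q)/(1+A+2* s*q)"
definition hE :: "real \<Rightarrow> real \<Rightarrow> real \<Rightarrow> real" where "hE A q s = (1-A)* s/(1+A+2* s*q)"
definition lam :: "real \<Rightarrow> real \<Rightarrow> real \<Rightarrow> real" where "lam A q s = (s+1)*(1+A+2*q)/(2*(1+A+2* s*q))"

lemma hden_pos: fixes A q s :: real assumes "A < 1" "q^2 \<le> A" "\<bar>s\<bar> \<le> 1" shows "1 + A + 2* s*q > 0"
proof -
  have "q^2 < 1" using assms by linarith
  hence q1: "\<bar>q\<bar> < 1" by (simp add: abs_square_less_1)
  have "\<bar>s*q\<bar> \<le> \<bar>q\<bar>" using assms(3) by (simp add: abs_mult mult_left_le_one_le)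
  hence sq: "s*q \<ge> -\<bar>q\<bar>" by linarith
  have "(1 - \<bar>q\<bar>)^2 > 0" using q1 by simp
  moreover have "(1 - \<bar>q\<bar>)^2 = 1 - 2*\<bar>q\<bar> + q^2" by (simp add: power2_eq_square algebra_simps)
  ultimately show ?thesis using sq assms(2) by linarith
qed

lemma h_lam:
  assumes n1: "1+A+2*q \<noteq> 0" and n2: "1+A-2*q \<noteq> 0" and ns: "1+A+2* s*q \<noteq> 0"
  shows "hC A q s = (1 - lam A q s) * hC A q (-1) + lam A q s * hC A q 1"
        "hE A q s = (1 - lam A q s) * hE A q (-1) + lam A q s * hE A q 1"
proof -
  obtain a1 a2 b where a1: "a1 = 1+A+2*q" and a2: "a2 = 1+A-2*q" and b: "b = 1+A+2* s*q" by blast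
  have e: "hC A q s = (2+2* s*q)/b" "hC A q 1 = (2+2*q)/a1" "hC A q (-1) = (2-2*q)/a2"
     "hE A q s = (1-A)* s/b" "hE A q 1 = (1-A)/a1" "hE A q (-1) = -(1-A)/a2"
     "lam A q s = (s+1)*a1/(2*b)"
    by (simp_all add: hC_def hE_def lam_def a1 a2 b)
  have z: "a1 \<noteq> 0" "a2 \<noteq> 0" "b \<noteq> 0" using n1 n2 ns a1 a2 b by auto
  show "hC A q s = (1 - lam A q s) * hC A q (-1) + lam A q s * hC A q 1"
    unfolding e using z by (simp add: field_simps; use a1 a2 b in algebra)
  show "hE A q s = (1 - lam A q s) * hE A q (-1) + lam A q s * hE A q 1"
    unfolding e using z by (simp add: field_simps; use a1 a2 b in algebra)
qed

lemma h_norm1: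
  assumes n1: "1+A+2*q \<noteq> 0"
  shows "hC A q 1 * hC A q 1 * A + (hC A q 1 * hE A q 1 + hE A q 1 * hC A q 1) * q + hE A q 1 * hE A q 1 * 1 = 1"
proof -
  obtain a1 where a1: "a1 = 1+A+2*q" by blast
  have e: "hC A q 1 = (2+2*q)/a1" "hE A q 1 = (1-A)/a1" by (simp_all add: hC_def hE_def a1)
  have z: "a1 \<noteq> 0" using n1 a1 by auto
  show ?thesis unfolding e using z by (simp add: field_simps; use a1 in algebra)
qed

lemma h_norm2:
  assumes n2: "1+A-2*q \<noteq> 0"
  shows "hC A q (-1) * hC A q (-1) * A + (hC A q (-1) * hE A q (-1) + hE A q (-1) * hC A q (-1)) * q + hE A q (-1) * hE A q (-1) * 1 = 1"
proof -
  obtain a2 where a2: "a2 = 1+A-2*q" by blast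
  have e: "hC A q (-1) = (2-2*q)/a2" "hE A q (-1) = -(1-A)/a2" by (simp_all add: hC_def hE_def a2)
  have z: "a2 \<noteq> 0" using n2 a2 by auto
  show ?thesis unfolding e using z by (simp add: field_simps; use a2 in algebra)
qed

lemma h_zero: "hC A q 0 = 2/(1+A)" "hE A q 0 = 0" by (simp_all add: hC_def hE_def)

lemma lam_range:
  assumes "A < 1" "q^2 \<le> A" "\<bar>s\<bar> < 1"
  shows "0 < lam A q s" "lam A q s < 1"
proof -
  have p1: "1+A+2*q > 0" using hden_pos[OF assms(1,2), of 1] by simp
  have p2: "1+A-2*q > 0" using hden_pos[OF assms(1,2), of "-1"] by simp
  have ps: "1+A+2* s*q > 0" using hden_pos[OF assms(1,2), of s] assms(3) by simp
  show "0 < lam A q s" unfolding lam_def using p1 ps assms(3) by (intro divide_pos_pos mult_pos_pos) auto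
  have "(s+1)*(1+A+2*q) < 2*(1+A+2* s*q)"
  proof -
    have "2*(1+A+2* s*q) - (s+1)*(1+A+2*q) = (1-s)*(1+A-2*q)" by (simp add: algebra_simps)
    moreover have "(1-s)*(1+A-2*q) > 0" using p2 assms(3) by simp
    ultimately show ?thesis by linarith
  qed
  thus "lam A q s < 1" unfolding lam_def using ps by simp
qed

lemma lam_inv:
  assumes "A < 1" "q^2 \<le> A" "0 < u" "u < 1"
  shows "\<exists>s. \<bar>s\<bar> < 1 \<and> lam A q s = u"
proof -
  obtain a1 a2 where a1: "a1 = 1+A+2*q" and a2: "a2 = 1+A-2*q" by blast
  have p1: "a1 > 0" using hden_pos[OF assms(1,2), of 1] by (simp add: a1)
  have p2: "a2 > 0" using hden_pos[OF assms(1,2), of "-1"] by (simp add: a2)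
  obtain den where den: "den = (1-u)*a1 + u*a2" by blast
  have dp: "den > 0" unfolding den using p1 p2 assms(3,4) by (simp add: add_pos_pos)
  define s where "s = (u*a2 - (1-u)*a1)/den"
  have "\<bar>u*a2 - (1-u)*a1\<bar> < den" unfolding den using p1 p2 assms(3,4)
    by (simp add: abs_less_iff add_pos_pos)
  hence sl: "\<bar>s\<bar> < 1" unfolding s_def using dp by (simp add: abs_div)
  have b: "1+A+2* s*q = a1*a2/den"
    unfolding s_def using dp by (simp add: field_simps; use a1 a2 den in algebra)
  have s1: "s + 1 = 2*u*a2/den" unfolding s_def using dp
    by (simp add: field_simps; use den in algebra)
  have "lam A q s = u" unfolding lam_def b a1[symmetric] s1 using dp p1 p2 by (simp add: field_simps)
  with sl show ?thesis by blast
qed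

lemma ipL: "ip c (\<alpha> *\<^sub>R a + \<beta> *\<^sub>R b) a = \<alpha> * ip c a a + \<beta> * ip c a b"
  by (simp add: ip_def inner_add_left inner_commute[of b a] add_divide_distrib)
lemma ipR: "ip c a (\<alpha> *\<^sub>R a + \<beta> *\<^sub>R b) = \<alpha> * ip c a a + \<beta> * ip c a b"
  by (simp add: ip_def inner_add_right add_divide_distrib)
lemma ipQ: "ip c (\<alpha> *\<^sub>R a + \<beta> *\<^sub>R b) (\<alpha> *\<^sub>R a + \<beta> *\<^sub>R b) = \<alpha>^2 * ip c a a + 2*\<alpha>*\<beta>*ip c a b + \<beta>^2 * ip c b b"
  unfolding ip2 by algebra
lemma lincomb: "s *\<^sub>R (\<alpha> *\<^sub>R a + \<beta> *\<^sub>R b) + t *\<^sub>R a = (s*\<alpha>+t) *\<^sub>R a + (s*\<beta>) *\<^sub>R b"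
  "s *\<^sub>R a + t *\<^sub>R (\<alpha> *\<^sub>R a + \<beta> *\<^sub>R b) = (s+t*\<alpha>) *\<^sub>R a + (t*\<beta>) *\<^sub>R b"
  "s *\<^sub>R (-(\<alpha> *\<^sub>R a + \<beta> *\<^sub>R b)) + t *\<^sub>R a = (-s*\<alpha>+t) *\<^sub>R a + (-s*\<beta>) *\<^sub>R b"
  for a b :: "'a::real_vector"
  by (simp_all add: algebra_simps)
lemma coef_cong: "x = x' \<Longrightarrow> y = y' \<Longrightarrow> x *\<^sub>R a + y *\<^sub>R b = x' *\<^sub>R a + y' *\<^sub>R b" by simp

lemma ip_nonneg: "ip c u u \<ge> 0" by (simp add: ip_def)

lemma prod_lt: fixes c :: real assumes "c > 0" "norm u < c" "norm v \<le> c" shows "norm u * norm v < c^2"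
proof -
  have "norm u * norm v \<le> norm u * c" using assms by (simp add: mult_left_mono)
  also have "\<dots> < c * c" using assms by (simp add: mult_strict_right_mono)
  finally show ?thesis by (simp add: power2_eq_square)
qed

lemma norm_add_ip:
  assumes c: "c \<noteq> 0" and d: "dn c u v \<noteq> 0"
  shows "ip c (mobius_add c u v) (mobius_add c u v) = 1 - (1 - ip c u u)*(1 - ip c v v) / dn c u v"
  unfolding madd_eq[OF c] ipQ by (rule sc_norm[OF _ d]) (simp add: dn_def)

lemma neg_add_self: "c \<noteq> 0 \<Longrightarrow> mobius_add c (-b) b = 0"
proof -
  assume c: "c \<noteq> 0"
  have e: "1 + 2*ip c (-b) b + ip c b b = 1 - ip c (-b) (-b)" by (simp add: ip_scale)
  show ?thesis unfolding madd_eq[OF c] e by simp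
qed

lemma add_zero_right: "mobius_add c a 0 = a" by (simp add: mobius_add_def)

lemma coadd_alt: "c \<noteq> 0 \<Longrightarrow> mobius_coadd c a b = mobius_add c a (mobius_add c (-(mobius_add c a (-b))) a)"
  unfolding mobius_coadd_def mobius_gyr_def mobius_neg_def by (simp add: neg_add_self add_zero_right)

lemma coadd_formula:
  assumes c: "c > 0" and a: "norm a < c" and b: "norm b < c"
  shows "mobius_coadd c a b = ((1 - ip c b b)/(1 - ip c a a * ip c b b)) *\<^sub>R a + ((1 - ip c a a)/(1 - ip c a a * ip c b b)) *\<^sub>R b"
proof -
  have c0: "c \<noteq> 0" using c by simp
  define A B P where "A = ip c a a" and "B = ip c b b" and "P = ip c a b"
  define d where "d = dn c a (-b)"
  have dd: "d = 1 - 2*P + A*B" unfolding d_def dn_def A_def B_def P_def by (simp add: ip_scale)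
  have "norm a * norm (-b) < c^2" using prod_lt[of c a "-b"] c a b by simp
  hence dp: "d > 0" unfolding d_def using dn_pos[OF c] by blast
  have A1: "A < 1" "A \<ge> 0" using ip_lt1[OF c a] ip_nonneg by (auto simp: A_def)
  have B1: "B < 1" "B \<ge> 0" using ip_lt1[OF c b] ip_nonneg by (auto simp: B_def)
  have "A*B \<le> A" using A1 B1 by (simp add: mult_left_le)
  hence AB: "1 - A*B \<noteq> 0" using A1 by simp
  have A1': "1 - A \<noteq> 0" using A1 by simp
  define \<alpha> \<beta> where "\<alpha> = (1 - 2*P + B)/d" and "\<beta> = -(1-A)/d"
  obtain w where wd: "w = mobius_add c a (-b)" by blast
  have w: "w = \<alpha> *\<^sub>R a + \<beta> *\<^sub>R b"
    unfolding wd madd_eq[OF c0] d_def[symmetric] scaleR_minus_right scaleR_minus_left[symmetric]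
    by (rule coef_cong) (simp_all add: \<alpha>_def \<beta>_def A_def B_def P_def ip_scale minus_divide_left algebra_simps)
  obtain y where yd: "y = mobius_add c (-w) a" by blast
  define s t where "s = (1 + 2*ip c (-w) a + ip c a a)/dn c (-w) a" and "t = (1 - ip c (-w) (-w))/dn c (-w) a"
  have wa: "ip c (-w) a = -(\<alpha>*A+\<beta>*P)" unfolding w ip_scale ipL A_def P_def by simp
  have ww: "ip c (-w) (-w) = \<alpha>^2*A+2*\<alpha>*\<beta>*P+\<beta>^2*B" unfolding w ip_scale ipQ A_def P_def B_def by simp
  have dw: "dn c (-w) a = 1 + 2*(-(\<alpha>*A+\<beta>*P)) + (\<alpha>^2*A+2*\<alpha>*\<beta>*P+\<beta>^2*B)*A"
    unfolding dn_def wa ww A_def by simp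
  have s2: "s = (1 + 2*(-(\<alpha>*A+\<beta>*P)) + A)/(1 + 2*(-(\<alpha>*A+\<beta>*P)) + (\<alpha>^2*A+2*\<alpha>*\<beta>*P+\<beta>^2*B)*A)"
    unfolding s_def wa dw A_def ..
  have t2: "t = (1 - (\<alpha>^2*A+2*\<alpha>*\<beta>*P+\<beta>^2*B))/(1 + 2*(-(\<alpha>*A+\<beta>*P)) + (\<alpha>^2*A+2*\<alpha>*\<beta>*P+\<beta>^2*B)*A)"
    unfolding t_def ww dw ..
  note sY = scY[OF dd _ A1' \<alpha>_def \<beta>_def s2 t2]
  define \<gamma> \<delta> where "\<gamma> = -2*B*(1-P)/d" and "\<delta> = (1-A*B)/d"
  have y: "y = \<gamma> *\<^sub>R a + \<delta> *\<^sub>R b"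
    unfolding yd madd_eq[OF c0] unfolding s_def[symmetric] t_def[symmetric] unfolding w lincomb \<gamma>_def \<delta>_def
    using sY dp by simp
  define s' t' where "s' = (1 + 2*ip c a y + ip c y y)/dn c a y" and "t' = (1 - ip c a a)/dn c a y"
  have ay: "ip c a y = \<gamma>*A+\<delta>*P" unfolding y ipR A_def P_def ..
  have yy: "ip c y y = \<gamma>^2*A+2*\<gamma>*\<delta>*P+\<delta>^2*B" unfolding y ipQ A_def P_def B_def ..
  have dy: "dn c a y = 1 + 2*(\<gamma>*A+\<delta>*P) + A*(\<gamma>^2*A+2*\<gamma>*\<delta>*P+\<delta>^2*B)"
    unfolding dn_def ay yy A_def ..
  have s3: "s' = (1 + 2*(\<gamma>*A+\<delta>*P) + (\<gamma>^2*A+2*\<gamma>*\<delta>*P+\<delta>^2*B))/(1 + 2*(\<gamma>*A+\<delta>*P) + A*(\<gamma>^2*A+2*\<gamma>*\<delta>*P+\<delta>^2*B))"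
    unfolding s'_def ay yy dy ..
  have t3: "t' = (1 - A)/(1 + 2*(\<gamma>*A+\<delta>*P) + A*(\<gamma>^2*A+2*\<gamma>*\<delta>*P+\<delta>^2*B))"
    unfolding t'_def dy A_def ..
  note sF = scF[OF dd _ AB \<gamma>_def \<delta>_def s3 t3]
  have "mobius_coadd c a b = mobius_add c a y" unfolding coadd_alt[OF c0] wd[symmetric] yd[symmetric] ..
  also have "\<dots> = (s' + t'*\<gamma>) *\<^sub>R a + (t'*\<delta>) *\<^sub>R b"
    unfolding madd_eq[OF c0] unfolding s'_def[symmetric] t'_def[symmetric] unfolding y lincomb ..
  also have "\<dots> = ((1-B)/(1-A*B)) *\<^sub>R a + ((1-A)/(1-A*B)) *\<^sub>R b" using sF dp by simp
  finally show ?thesis unfolding A_def B_def .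
qed

lemma ip_lt1_iff: assumes c: "c > 0" shows "ip c u u < 1 \<longleftrightarrow> norm u < c"
proof -
  have "ip c u u < 1 \<longleftrightarrow> \<bar>norm u / c\<bar> < 1" unfolding ip_norm by (rule abs_square_less_1)
  also have "\<dots> \<longleftrightarrow> norm u < c" using c by (simp add: abs_div divide_less_eq)
  finally show ?thesis .
qed

lemma ip_le1_iff: assumes c: "c > 0" shows "ip c u u \<le> 1 \<longleftrightarrow> norm u \<le> c"
proof -
  have "ip c u u \<le> 1 \<longleftrightarrow> \<bar>norm u / c\<bar> \<le> 1" unfolding ip_norm by (rule abs_square_le_1)
  also have "\<dots> \<longleftrightarrow> norm u \<le> c" using c by (simp add: abs_div divide_le_eq)
  finally show ?thesis .
qed

lemma ffden_pos: assumes c: "c>0" and C: "norm C < c" and x: "norm x \<le> c"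
  shows "1 + ip c C C + 2*ip c C x > 0"
proof -
  define r where "r = norm C / c"
  have r1: "r < 1" using c C by (auto simp: r_def divide_less_eq)
  have c2: "c^2 > 0" using c by simp
  have "C\<bullet>x \<ge> - (norm C * norm x)" using Cauchy_Schwarz_ineq2[of C x] by linarith
  hence h1: "ip c C x \<ge> - (norm C * norm x)/c^2"
    unfolding ip_def using c2 divide_right_mono[of "- (norm C * norm x)" "C\<bullet>x" "c^2"] by simp
  have "norm C * norm x \<le> norm C * c" using x by (simp add: mult_left_mono)
  hence "(norm C * norm x)/c^2 \<le> (norm C * c)/c^2" using c2 by (simp add: divide_right_mono)
  also have "(norm C*c)/c^2 = r" using c by (simp add: r_def power2_eq_square)
  finally have h2: "(norm C * norm x)/c^2 \<le> r" .
  have h3: "ip c C C = r^2" by (simp add: ip_norm r_def)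
  have "(1-r)^2 > 0" using r1 by simp
  hence "1 - 2*r + r^2 > 0" by (simp add: power2_eq_square algebra_simps)
  thus ?thesis using h1 h2 h3 by linarith
qed

lemma norm_add_lt: assumes c: "c > 0" and u: "norm u < c" and v: "norm v < c"
  shows "norm (mobius_add c u v) < c"
proof -
  have "norm u * norm v < c^2" using prod_lt[of c u v] c u v by simp
  hence dp: "dn c u v > 0" using dn_pos[OF c] by blast
  have "(1 - ip c u u)*(1 - ip c v v) / dn c u v > 0"
    using ip_lt1[OF c u] ip_lt1[OF c v] dp by simp
  moreover have "ip c (mobius_add c u v) (mobius_add c u v) = 1 - (1 - ip c u u)*(1 - ip c v v) / dn c u v"
    by (rule norm_add_ip) (use c dp in auto)
  ultimately have "ip c (mobius_add c u v) (mobius_add c u v) < 1" by linarith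
  thus ?thesis using ip_lt1_iff[OF c] by blast
qed

lemma add_cancel: assumes c: "c > 0" and C: "norm C < c" and D: "norm D < c"
  shows "mobius_add c C (mobius_add c (-C) D) = D"
proof -
  have c0: "c \<noteq> 0" using c by simp
  define A B P where "A = ip c C C" and "B = ip c D D" and "P = ip c C D"
  define d where "d = dn c (-C) D"
  have dd: "d = 1 + 2*(-P) + A*B" unfolding d_def dn_def A_def B_def P_def by (simp add: ip_scale)
  have "norm (-C) * norm D < c^2" using prod_lt[of c "-C" D] c C D by simp
  hence dp: "d > 0" unfolding d_def using dn_pos[OF c] by blast
  have A1: "1 - A \<noteq> 0" using ip_lt1[OF c C] by (simp add: A_def)
  define \<alpha> \<beta> where "\<alpha> = -((1 + 2*(-P) + B)/d)" and "\<beta> = (1-A)/d"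
  obtain w where wd: "w = mobius_add c (-C) D" by blast
  have w: "w = \<alpha> *\<^sub>R C + \<beta> *\<^sub>R D"
    unfolding wd madd_eq[OF c0] d_def[symmetric] scaleR_minus_right scaleR_minus_left[symmetric]
    by (rule coef_cong) (simp_all add: \<alpha>_def \<beta>_def A_def B_def P_def ip_scale)
  define s t where "s = (1 + 2*ip c C w + ip c w w)/dn c C w" and "t = (1 - ip c C C)/dn c C w"
  have cw: "ip c C w = \<alpha>*A+\<beta>*P" unfolding w ipR A_def P_def ..
  have ww: "ip c w w = \<alpha>^2*A+2*\<alpha>*\<beta>*P+\<beta>^2*B" unfolding w ipQ A_def P_def B_def ..
  have dw: "dn c C w = 1 + 2*(\<alpha>*A+\<beta>*P) + A*(\<alpha>^2*A+2*\<alpha>*\<beta>*P+\<beta>^2*B)"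
    unfolding dn_def cw ww A_def ..
  have s2: "s = (1 + 2*(\<alpha>*A+\<beta>*P) + (\<alpha>^2*A+2*\<alpha>*\<beta>*P+\<beta>^2*B))/(1 + 2*(\<alpha>*A+\<beta>*P) + A*(\<alpha>^2*A+2*\<alpha>*\<beta>*P+\<beta>^2*B))"
    unfolding s_def cw ww dw ..
  have t2: "t = (1 - A)/(1 + 2*(\<alpha>*A+\<beta>*P) + A*(\<alpha>^2*A+2*\<alpha>*\<beta>*P+\<beta>^2*B))"
    unfolding t_def dw A_def ..
  note sc = scCancel[OF dd _ A1 \<alpha>_def \<beta>_def s2 t2]
  have "mobius_add c C (mobius_add c (-C) D) = (s + t*\<alpha>) *\<^sub>R C + (t*\<beta>) *\<^sub>R D"
    unfolding wd[symmetric] unfolding madd_eq[OF c0] unfolding s_def[symmetric] t_def[symmetric] unfolding w lincomb ..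
  also have "\<dots> = D" using sc dp by simp
  finally show ?thesis .
qed

definition ff :: "real \<Rightarrow> real^'n \<Rightarrow> real^'n \<Rightarrow> real^'n" where
  "ff c C x = ((2 + 2*ip c C x)/(1 + ip c C C + 2*ip c C x)) *\<^sub>R C + ((1 - ip c C C)/(1 + ip c C C + 2*ip c C x)) *\<^sub>R x"

lemma coadd_ff: assumes c: "c > 0" and C: "norm C < c" and x: "norm x < c"
  shows "mobius_coadd c C (mobius_add c C x) = ff c C x"
proof -
  have c0: "c \<noteq> 0" using c by simp
  define A X Q where "A = ip c C C" and "X = ip c x x" and "Q = ip c C x"
  define d where "d = dn c C x"
  have dd: "d = 1 + 2*Q + A*X" unfolding d_def dn_def A_def X_def Q_def ..
  have "norm C * norm x < c^2" using prod_lt[of c C x] c C x by simp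
  hence dp: "d > 0" unfolding d_def using dn_pos[OF c] by blast
  have A1: "1 - A \<noteq> 0" using ip_lt1[OF c C] by (simp add: A_def)
  obtain b where bd: "b = mobius_add c C x" by blast
  have bn: "norm b < c" unfolding bd by (rule norm_add_lt[OF c C x])
  have B: "ip c b b = 1 - (1-A)*(1-X)/d" unfolding bd d_def A_def X_def
    by (rule norm_add_ip[OF c0]) (use dp d_def in simp)
  have "1 + A + 2*Q > 0" using ffden_pos[OF c C, of x] x unfolding A_def Q_def by simp
  hence q: "1 + A + 2*Q \<noteq> 0" by simp
  note sc = scFF[OF dd _ A1 B q]
  have b: "b = ((1 + 2*Q + X)/d) *\<^sub>R C + ((1-A)/d) *\<^sub>R x"
    unfolding bd madd_eq[OF c0] d_def A_def X_def Q_def ..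
  have "mobius_coadd c C b = ((1 - ip c b b)/(1 - A * ip c b b)) *\<^sub>R C + ((1 - A)/(1 - A * ip c b b)) *\<^sub>R b"
    unfolding A_def by (rule coadd_formula[OF c C bn])
  also have "\<dots> = ((1 - ip c b b)/(1 - A * ip c b b) + (1 - A)/(1 - A * ip c b b) * ((1 + 2*Q + X)/d)) *\<^sub>R C
      + ((1 - A)/(1 - A * ip c b b) * ((1-A)/d)) *\<^sub>R x"
    unfolding b lincomb ..
  also have "\<dots> = ff c C x" unfolding ff_def A_def[symmetric] Q_def[symmetric] sc(1)[OF dp[THEN less_imp_neq, symmetric]] sc(2)[OF dp[THEN less_imp_neq, symmetric]] ..
  finally show ?thesis unfolding bd .
qed

lemma add_ff_bd: assumes c: "c > 0" and x: "norm x = c"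
  shows "mobius_add c C x = ff c C x"
proof -
  have c0: "c \<noteq> 0" using c by simp
  have X: "ip c x x = 1" unfolding ip_norm x using c0 by simp
  show ?thesis unfolding madd_eq[OF c0] ff_def dn_def X
    by (rule coef_cong) (simp_all add: algebra_simps)
qed

lemma coadd_self: assumes c: "c>0" and a: "norm a < c"
  shows "mobius_coadd c a a = (2/(1 + ip c a a)) *\<^sub>R a"
proof -
  define E where "E = ip c a a"
  have E1: "E < 1" "E \<ge> 0" using ip_lt1[OF c a] ip_nonneg by (auto simp: E_def)
  have h: "1 - E*E = (1-E)*(1+E)" by algebra
  have k: "(1-E)/(1-E*E) = 1/(1+E)" unfolding h using E1 by simp
  have "mobius_coadd c a a = (1/(1+E)) *\<^sub>R a + (1/(1+E)) *\<^sub>R a"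
    using coadd_formula[OF c a a] unfolding E_def[symmetric] k .
  also have "\<dots> = (2/(1+E)) *\<^sub>R a" by (simp add: scaleR_left_distrib[symmetric])
  finally show ?thesis unfolding E_def .
qed

lemma coadd_DD: assumes c: "c>0" and C: "norm C < c" and v: "norm v < c"
   and x2: "norm ((2/(1 + ip c v v)) *\<^sub>R v) \<le> c"
  shows "mobius_coadd c (mobius_add c C v) (mobius_add c C v) = ff c C ((2/(1 + ip c v v)) *\<^sub>R v)"
proof -
  have c0: "c \<noteq> 0" using c by simp
  define A V Q where "A = ip c C C" and "V = ip c v v" and "Q = ip c C v"
  define d where "d = dn c C v"
  have dd: "d = 1 + 2*Q + A*V" unfolding d_def dn_def A_def V_def Q_def ..
  have "norm C * norm v < c^2" using prod_lt[of c C v] c C v by simp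
  hence dp: "d > 0" unfolding d_def using dn_pos[OF c] by blast
  have V1: "1 + V \<noteq> 0" using ip_nonneg[of c v] by (simp add: V_def)
  obtain D where Dd: "D = mobius_add c C v" by blast
  have Dn: "norm D < c" unfolding Dd by (rule norm_add_lt[OF c C v])
  have DD: "ip c D D = 1 - (1-A)*(1-V)/d" unfolding Dd d_def A_def V_def
    by (rule norm_add_ip[OF c0]) (use dp d_def in simp)
  have "1 + A + 2*(2/(1+V)*Q) > 0" using ffden_pos[OF c C x2] unfolding A_def V_def Q_def ip_scale by simp
  hence q: "1 + A + 2*(2/(1+V)*Q) \<noteq> 0" by simp
  note sc = scDD[OF dd dp[THEN less_imp_neq, symmetric] V1 DD q]
  have Dv: "D = ((1 + 2*Q + V)/d) *\<^sub>R C + ((1-A)/d) *\<^sub>R v"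
    unfolding Dd madd_eq[OF c0] d_def A_def V_def Q_def ..
  have "mobius_coadd c D D = (2/(1 + ip c D D)) *\<^sub>R D" by (rule coadd_self[OF c Dn])
  also have "\<dots> = (2/(1 + ip c D D) * ((1 + 2*Q + V)/d)) *\<^sub>R C + (2/(1 + ip c D D) * ((1-A)/d)) *\<^sub>R v"
    unfolding Dv by (simp add: scaleR_add_right)
  also have "\<dots> = ff c C ((2/(1 + V)) *\<^sub>R v)"
    unfolding sc ff_def ip_scale A_def[symmetric] Q_def[symmetric] by (simp add: scaleR_scaleR)
  finally show ?thesis unfolding Dd V_def .
qed

lemma tanh_artanh: fixes x :: real assumes x: "\<bar>x\<bar> < 1" shows "tanh (artanh x) = x"
proof -
  have x1: "1 + x > 0" "1 - x > 0" using x by auto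
  have p: "(1+x)/(1-x) > 0" using x1 by simp
  have "-2 * artanh x = - ln ((1+x)/(1-x))" by (simp add: artanh_def)
  hence "exp (-2 * artanh x) = inverse ((1+x)/(1-x))" using p by (simp add: exp_minus)
  hence e: "exp (-2 * artanh x) = (1-x)/(1+x)" by simp
  show ?thesis unfolding tanh_real_altdef e using x1 by (simp add: field_simps)
qed

lemma smult2: assumes c: "c>0" and a: "norm a < c" shows "mobius_coadd c a a = mobius_smult c 2 a"
proof (cases "a = 0")
  case True thus ?thesis using coadd_self[OF c a] by (simp add: mobius_smult_def)
next
  case False
  define r where "r = norm a / c"
  have na: "norm a > 0" using False by simp
  have r0: "r > 0" "r < 1" using na c a by (auto simp: r_def divide_less_eq)
  have ta: "tanh (artanh r) = r" using r0 by (intro tanh_artanh) simp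
  have "tanh (2 * artanh r) = tanh (artanh r + artanh r)" by simp
  also have "\<dots> = 2*r/(1+r^2)" unfolding tanh_add[OF cosh_real_nonzero cosh_real_nonzero] ta
    by (simp add: power2_eq_square)
  finally have t2: "tanh (2 * artanh r) = 2*r/(1+r^2)" .
  have A: "ip c a a = r^2" by (simp add: ip_norm r_def)
  have "mobius_smult c 2 a = (c * (2*r/(1+r^2)) * (1/norm a)) *\<^sub>R a"
    unfolding mobius_smult_def using False t2 by (simp add: r_def)
  also have "c * (2*r/(1+r^2)) * (1/norm a) = 2/(1+r^2)"
  proof -
    have cr: "c*r = norm a" using c by (simp add: r_def)
    have "1 + r^2 > 0" by (simp add: add_pos_nonneg)
    moreover have "r \<noteq> 0" using r0 by simp
    ultimately show ?thesis unfolding cr[symmetric] using c by (simp add: field_simps)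
  qed
  finally show ?thesis unfolding coadd_self[OF c a] A by simp
qed

lemma ff_h: "ff c C (s *\<^sub>R e) = hC (ip c C C) (ip c C e) s *\<^sub>R C + hE (ip c C C) (ip c C e) s *\<^sub>R e"
  unfolding ff_def hC_def hE_def ip_scale scaleR_scaleR by (rule coef_cong) (simp_all add: mult.assoc)

lemma ip_pos: "x \<noteq> 0 \<Longrightarrow> c \<noteq> 0 \<Longrightarrow> ip c x x > 0" by (simp add: ip_def)

lemma q_sq_le: assumes c: "c > 0" and e: "norm e = c"
  shows "(ip c C e)^2 \<le> ip c C C"
proof -
  have "\<bar>C \<bullet> e\<bar> \<le> norm C * c" using Cauchy_Schwarz_ineq2[of C e] e by simp
  hence "\<bar>C \<bullet> e\<bar>^2 \<le> (norm C * c)^2" by (intro power_mono) auto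
  hence "(C \<bullet> e)^2 \<le> (norm C)^2 * c^2" by (simp add: power_mult_distrib)
  hence "(C \<bullet> e)^2 / (c^2)^2 \<le> (norm C)^2 * c^2 / (c^2)^2" by (intro divide_right_mono) auto
  also have "(norm C)^2 * c^2 / (c^2)^2 = (norm C)^2 / c^2" using c by (simp add: power2_eq_square)
  finally show ?thesis unfolding ip_def power2_norm_eq_inner by (simp add: power_divide)
qed

lemma chord:
  assumes c: "c>0" and C: "norm C < c" and e: "norm e = c"
  shows "supporting_chord c (ff c C e) (ff c C (-e)) = (\<lambda>s. ff c C (s *\<^sub>R e)) ` {-1<..<1}"
proof -
  have c0: "c \<noteq> 0" using c by simp
  define A q where "A = ip c C C" and "q = ip c C e"
  have A1: "A < 1" using ip_lt1[OF c C] by (simp add: A_def)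
  have qA: "q^2 \<le> A" unfolding A_def q_def by (rule q_sq_le[OF c e])
  have ee: "ip c e e = 1" unfolding ip_norm e using c0 by simp
  have p1: "1+A+2*q > 0" using hden_pos[OF A1 qA, of 1] by simp
  have p2: "1+A-2*q > 0" using hden_pos[OF A1 qA, of "-1"] by simp
  define h where "h s = ff c C (s *\<^sub>R e)" for s
  have hh: "h s = hC A q s *\<^sub>R C + hE A q s *\<^sub>R e" for s unfolding h_def A_def q_def by (rule ff_h)
  define E1 E2 where "E1 = h 1" and "E2 = h (-1)"
  have E1d: "ff c C e = E1" unfolding E1_def h_def by simp
  have E2d: "ff c C (-e) = E2" unfolding E2_def h_def by simp
  have n1: "ip c E1 E1 = 1" unfolding E1_def hh ip2 ee q_def[symmetric] A_def[symmetric]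
    by (rule h_norm1) (use p1 in simp)
  have n2: "ip c E2 E2 = 1" unfolding E2_def hh ip2 ee q_def[symmetric] A_def[symmetric]
    by (rule h_norm2) (use p2 in simp)
  have aff: "h s = (1 - lam A q s) *\<^sub>R E2 + lam A q s *\<^sub>R E1" if "\<bar>s\<bar> \<le> 1" for s
  proof -
    have ps: "1+A+2* s*q \<noteq> 0" using hden_pos[OF A1 qA that] by simp
    note hl = h_lam[OF p1[THEN less_imp_neq, symmetric] p2[THEN less_imp_neq, symmetric] ps]
    show ?thesis unfolding E1_def E2_def hh hl by (simp add: algebra_simps)
  qed
  have Z: "ip c (u *\<^sub>R E1 + (1-u) *\<^sub>R E2) (u *\<^sub>R E1 + (1-u) *\<^sub>R E2) = 1 - u*(1-u)*(2 - 2*ip c E1 E2)" for u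
    unfolding ip2 n1 n2 by algebra
  have neq: "E1 \<noteq> E2"
  proof
    assume eq: "E1 = E2"
    have "h 0 = E2" using aff[of 0] eq by (simp add: algebra_simps)
    hence "ip c (h 0) (h 0) = 1" using n2 by simp
    moreover have "ip c (h 0) (h 0) = (2/(1+A))^2 * A"
      unfolding hh h_zero by (simp add: ip_scale A_def power2_eq_square)
    moreover have "(2/(1+A))^2 * A < 1"
    proof -
      have A0: "A \<ge> 0" using ip_nonneg by (simp add: A_def)
      have "(1-A)^2 > 0" using A1 by simp
      hence "4*A < (1+A)^2" by (simp add: power2_eq_square algebra_simps)
      thus ?thesis using A0 by (simp add: power_divide divide_less_eq add_pos_nonneg)
    qed
    ultimately show False by simp
  qed
  have m: "2 - 2*ip c E1 E2 > 0"
  proof -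
    have "ip c (E1 - E2) (E1 - E2) > 0" using neq c0 by (intro ip_pos) auto
    moreover have "ip c (E1 - E2) (E1 - E2) = 2 - 2*ip c E1 E2"
      using ip2[of c 1 E1 "-1" E2 1 "-1"] n1 n2 by simp
    ultimately show ?thesis by simp
  qed
  show ?thesis unfolding E1d E2d
  proof
    show "supporting_chord c E1 E2 \<subseteq> (\<lambda>s. ff c C (s *\<^sub>R e)) ` {-1<..<1}"
    proof
      fix x assume "x \<in> supporting_chord c E1 E2"
      then obtain u v where xn: "norm x < c" and x: "x = u *\<^sub>R E1 + v *\<^sub>R E2" and uv: "u + v = 1"
        unfolding supporting_chord_def affine_hull_2 by blast
      have "v = 1 - u" using uv by simp
      hence x': "x = u *\<^sub>R E1 + (1-u) *\<^sub>R E2" using x by simp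
      have "ip c x x < 1" using xn ip_lt1_iff[OF c] by blast
      hence "u*(1-u)*(2 - 2*ip c E1 E2) > 0" unfolding x' Z by simp
      hence "u*(1-u) > 0" using m by (simp add: zero_less_mult_iff)
      hence u01: "0 < u" "u < 1" by (auto simp: zero_less_mult_iff)
      obtain s where s: "\<bar>s\<bar> < 1" "lam A q s = u" using lam_inv[OF A1 qA u01] by blast
      have "ff c C (s *\<^sub>R e) = x" using aff[of s] s unfolding h_def x' by (simp add: algebra_simps)
      moreover have "s \<in> {-1<..<1}" using s by auto
      ultimately show "x \<in> (\<lambda>s. ff c C (s *\<^sub>R e)) ` {-1<..<1}" by blast
    qed
  next
    show "(\<lambda>s. ff c C (s *\<^sub>R e)) ` {-1<..<1} \<subseteq> supporting_chord c E1 E2"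
    proof
      fix x assume "x \<in> (\<lambda>s. ff c C (s *\<^sub>R e)) ` {-1<..<1}"
      then obtain s where s0: "s \<in> {-1<..<1}" and x0: "x = ff c C (s *\<^sub>R e)" by blast
      have s: "\<bar>s\<bar> < 1" using s0 by auto
      have x: "x = h s" using x0 by (simp add: h_def)
      define L where "L = lam A q s"
      have L: "0 < L" "L < 1" using lam_range[OF A1 qA s] by (auto simp: L_def)
      have x': "x = L *\<^sub>R E1 + (1-L) *\<^sub>R E2" using aff[of s] s x by (simp add: L_def algebra_simps)
      have "ip c x x = 1 - L*(1-L)*(2 - 2*ip c E1 E2)" unfolding x' Z ..
      moreover have "L*(1-L)*(2 - 2*ip c E1 E2) > 0" using L m by simp
      ultimately have "ip c x x < 1" by simp
      hence "norm x < c" using ip_lt1_iff[OF c] by blast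
      moreover have "x \<in> affine hull {E1, E2}" unfolding affine_hull_2 x' by force
      ultimately show "x \<in> supporting_chord c E1 E2" unfolding supporting_chord_def by blast
    qed
  qed
qed

lemma cont_line: assumes c: "c > 0" and C: "norm C < c" and e: "norm e = c" and z: "\<bar>z0\<bar> = 1"
  shows "isCont (\<lambda>z. mobius_add c C (z *\<^sub>R e)) z0"
proof -
  have c0: "c \<noteq> 0" using c by simp
  have "norm C * norm (z0 *\<^sub>R e) < c^2" using prod_lt[of c C "z0 *\<^sub>R e"] c C e z by simp
  hence dp: "dn c C (z0 *\<^sub>R e) > 0" using dn_pos[OF c] by blast
  have f: "(\<lambda>z. mobius_add c C (z *\<^sub>R e)) = (\<lambda>z. ((1 + 2*ip c C (z *\<^sub>R e) + ip c (z *\<^sub>R e) (z *\<^sub>R e)) / dn c C (z *\<^sub>R e)) *\<^sub>R C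
      + ((1 - ip c C C) / dn c C (z *\<^sub>R e)) *\<^sub>R (z *\<^sub>R e))"
    by (rule ext) (rule madd_eq[OF c0])
  have dp': "dn c C (z0 *\<^sub>R e) \<noteq> 0" using dp by simp
  show ?thesis unfolding f dn_def ip_def
    by (intro continuous_intros) (use dp' c0 in \<open>simp_all add: dn_def ip_def\<close>)
qed

theorem theorem3:
  fixes c :: real and C D :: "real^'n"
  assumes "c > 0" and "CARD('n) \<ge> 2"
    and "norm C < c" and "norm D < c" and "C \<noteq> D"
  shows "\<exists>E1 E2.
           (gyroline c C D \<longlongrightarrow> E1) at_top \<and>
           (gyroline c C D \<longlongrightarrow> E2) at_bot \<and>
           supporting_chord c E1 E2 = range (\<lambda>t. mobius_coadd c C (gyroline c C D t)) \<and>
           mobius_coadd c C C = mobius_smult c 2 C \<and>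
           mobius_coadd c D D = mobius_smult c 2 D \<and>
           mobius_coadd c C C \<in> supporting_chord c E1 E2 \<and>
           mobius_coadd c D D \<in> supporting_chord c E1 E2 \<and>
           mobius_coadd c C D \<in> supporting_chord c E1 E2"
proof -
  note c = assms(1) and Cn = assms(3) and Dn = assms(4)
  have c0: "c \<noteq> 0" using c by simp
  define v where "v = mobius_add c (-C) D"
  have nC': "norm (-C) < c" using Cn by simp
  have vn: "norm v < c" unfolding v_def by (rule norm_add_lt[OF c nC' Dn])
  have Dv: "mobius_add c C v = D" unfolding v_def by (rule add_cancel[OF c Cn Dn])
  have v0: "v \<noteq> 0"
  proof
    assume "v = 0"
    with Dv have "D = C" by (simp add: add_zero_right)
    with assms(5) show False by simp
  qed
  define e where "e = (c / norm v) *\<^sub>R v"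
  have en: "norm e = c" using v0 c by (simp add: e_def)
  define \<rho> where "\<rho> = norm v / c"
  have \<rho>: "0 < \<rho>" "\<rho> < 1" using v0 vn c by (auto simp: \<rho>_def divide_less_eq)
  define K where "K = artanh \<rho>"
  have tK: "tanh K = \<rho>" unfolding K_def by (rule tanh_artanh) (use \<rho> in simp)
  have K0: "K > 0" using tK \<rho> tanh_real_less_iff[of 0 K] by simp
  have ve: "\<rho> *\<^sub>R e = v" using v0 c by (simp add: e_def \<rho>_def)
  have gl: "gyroline c C D t = mobius_add c C (tanh (K * t) *\<^sub>R e)" for t
  proof -
    have "gyroline c C D t = mobius_add c C (mobius_smult c t v)"
      unfolding gyroline_def mobius_neg_def v_def ..
    also have "mobius_smult c t v = tanh (K * t) *\<^sub>R e"
      unfolding mobius_smult_def using v0 by (simp add: e_def K_def \<rho>_def mult.commute)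
    finally show ?thesis .
  qed
  have tn: "norm (tanh (K * t) *\<^sub>R e) < c" for t
  proof -
    have "\<bar>tanh (K*t)\<bar> < 1" using tanh_real_bounds[of "K*t"] by auto
    hence "\<bar>tanh (K*t)\<bar> * c < 1 * c" using c by (intro mult_strict_right_mono) auto
    thus ?thesis using en by simp
  qed
  have cf: "mobius_coadd c C (gyroline c C D t) = ff c C (tanh (K * t) *\<^sub>R e)" for t
    unfolding gl by (rule coadd_ff[OF c Cn tn])
  have E1: "mobius_add c C (1 *\<^sub>R e) = ff c C e" using add_ff_bd[OF c en] by simp
  have E2: "mobius_add c C ((-1) *\<^sub>R e) = ff c C (-e)" using add_ff_bd[OF c, of "-e"] en by simp
  have glf: "gyroline c C D = (\<lambda>t. (\<lambda>z. mobius_add c C (z *\<^sub>R e)) (tanh (K * t)))"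
    using gl by (simp add: fun_eq_iff)
  have lt: "((\<lambda>t. tanh (K*t)) \<longlongrightarrow> 1) at_top"
    by (rule filterlim_compose[OF tanh_real_at_top filterlim_tendsto_pos_mult_at_top[OF tendsto_const K0 filterlim_ident]])
  have lb: "((\<lambda>t. tanh (K*t)) \<longlongrightarrow> -1) at_bot"
    by (rule filterlim_compose[OF tanh_real_at_bot filterlim_tendsto_pos_mult_at_bot[OF tendsto_const K0 filterlim_ident]])
  have L1: "(gyroline c C D \<longlongrightarrow> ff c C e) at_top"
    unfolding glf E1[symmetric] by (rule isCont_tendsto_compose[OF cont_line[OF c Cn en] lt]) simp
  have L2: "(gyroline c C D \<longlongrightarrow> ff c C (-e)) at_bot"
    unfolding glf E2[symmetric] by (rule isCont_tendsto_compose[OF cont_line[OF c Cn en] lb]) simp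
  have rt: "range (\<lambda>t. tanh (K*t)) = {-1<..<1}"
  proof
    show "range (\<lambda>t. tanh (K*t)) \<subseteq> {-1<..<1}" using tanh_real_bounds by auto
    show "{-1<..<1} \<subseteq> range (\<lambda>t. tanh (K*t))"
    proof
      fix s :: real assume s: "s \<in> {-1<..<1}"
      have "tanh (K * (artanh s / K)) = s" using K0 s by (simp add: tanh_artanh abs_less_iff)
      thus "s \<in> range (\<lambda>t. tanh (K*t))" by (metis rangeI)
    qed
  qed
  have R: "range (\<lambda>t. mobius_coadd c C (gyroline c C D t)) = (\<lambda>s. ff c C (s *\<^sub>R e)) ` {-1<..<1}"
    unfolding cf rt[symmetric] by (simp add: image_image)
  have CH: "supporting_chord c (ff c C e) (ff c C (-e)) = (\<lambda>s. ff c C (s *\<^sub>R e)) ` {-1<..<1}"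
    by (rule chord[OF c Cn en])
  have g0: "gyroline c C D 0 = C" unfolding gl by (simp add: add_zero_right)
  have g1: "gyroline c C D 1 = D" unfolding gl using tK ve Dv by simp
  have mCC: "mobius_coadd c C C \<in> range (\<lambda>t. mobius_coadd c C (gyroline c C D t))"
    using g0 by (metis rangeI)
  have mCD: "mobius_coadd c C D \<in> range (\<lambda>t. mobius_coadd c C (gyroline c C D t))"
    using g1 by (metis rangeI)
  define \<sigma> where "\<sigma> = 2/(1 + ip c v v) * \<rho>"
  have V: "ip c v v = \<rho>^2" by (simp add: ip_norm \<rho>_def)
  have \<sigma>1: "\<bar>\<sigma>\<bar> < 1"
  proof -
    have "(1-\<rho>)^2 > 0" using \<rho> by simp
    hence "2*\<rho> < 1 + \<rho>^2" by (simp add: power2_eq_square algebra_simps)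
    moreover have "1 + \<rho>^2 > 0" by (simp add: add_pos_nonneg)
    ultimately show ?thesis unfolding \<sigma>_def V using \<rho> by (simp add: abs_less_iff divide_less_eq)
  qed
  have x2: "(2/(1 + ip c v v)) *\<^sub>R v = \<sigma> *\<^sub>R e" unfolding \<sigma>_def ve[symmetric] by simp
  have x2n: "norm ((2/(1 + ip c v v)) *\<^sub>R v) \<le> c"
    unfolding x2 using \<sigma>1 en c by (simp add: mult_left_le_one_le)
  have mDD: "mobius_coadd c D D = ff c C (\<sigma> *\<^sub>R e)"
    using coadd_DD[OF c Cn vn x2n] unfolding Dv x2 .
  have mDD': "mobius_coadd c D D \<in> (\<lambda>s. ff c C (s *\<^sub>R e)) ` {-1<..<1}"
    unfolding mDD using \<sigma>1 by (auto simp: abs_less_iff)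
  show ?thesis
    apply (rule exI[of _ "ff c C e"], rule exI[of _ "ff c C (-e)"])
    using L1 L2 CH R mCC mCD mDD' smult2[OF c Cn] smult2[OF c Dn] by simp
qed

end
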